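(* Let $\mathbb{X}$ be a linearly ordered radicable idempotent semifield, $n\ge1$, $\bm{A}\in\mathbb{X}^{n\times n}$ with spectral radius $\lambda=\bigoplus_{k=1}^{n}(\mathrm{tr}\,\bm{A}^{k})^{1/k}$, $\bm{p},\bm{g}\in\mathbb{X}^n$, $\bm{q},\bm{h}\in\mathbb{X}^n$ regular vectors, and $r\in\mathbb{X}$, such that $\bm{h}^{-}\bm{g}\le\mathbb{1}$ and $\lambda\oplus(\bm{q}^{-}\bm{p})^{1/2}\oplus r>\mathbb{0}$. Consider minimizing $\bm{x}^{-}\bm{A}\bm{x}\oplus\bm{x}^{-}\bm{p}\oplus\bm{q}^{-}\bm{x}\oplus r$ over regular $\bm{x}\in\mathbb{X}^n$ subject to $\bm{g}\le\bm{x}\le\bm{h}$. Then the minimum value is $$\theta=\lambda\oplus\bigoplus_{k=1}^{n-1}(\bm{h}^{-}\bm{A}^{k}\bm{g})^{1/k}\oplus\bigoplus_{k=0}^{n-1}(\bm{q}^{-}\bm{A}^{k}\bm{g}\oplus\bm{h}^{-}\bm{A}^{k}\bm{p})^{1/(k+1)}\oplus\bigoplus_{k=0}^{n-1}(\bm{q}^{-}\bm{A}^{k}\bm{p})^{1/(k+2)}\oplus r,$$ and all regular solutions are exactly the vectors $\bm{x}=(\theta^{-1}\bm{A})^{\ast}\bm{u}$ with $\bm{u}$ any vector satisfying $\theta^{-1}\bm{p}\oplus\bm{g}\le\bm{u}\le\big((\theta^{-1}\bm{q}^{-}\oplus\bm{h}^{-})(\theta^{-1}\bm{A})^{\ast}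\big)^{-}$.
   Context: An idempotent semifield is $(\mathbb{X},\oplus,\otimes,\mathbb{0},\mathbb{1})$ where $(\mathbb{X},\oplus,\mathbb{0})$ is a commutative monoid with idempotent addition, $(\mathbb{X}\setminus\{\mathbb{0}\},\otimes,\mathbb{1})$ is an abelian group, and $\otimes$ distributes over $\oplus$; the product sign is omitted. The order is $x\le y$ iff $x\oplus y=y$, assumed linear; "minimum" refers to this order. Radicable means $x^m=a$ is solvable for all $a$ and integers $m\ge1$, so rational powers are defined. Matrix/vector operations use $\oplus,\otimes$; inequalities are entrywise. $\bm{I}$ is the identity matrix, $\bm{A}^0=\bm{I}$. A vector is regular if all entries are nonzero. For a nonzero vector $\bm{x}$, $\bm{x}^{-}$ is the transposed vector with entries $x_i^{-1}$ if $x_i\ne\mathbb{0}$ and $\mathbb{0}$ otherwise. $\mathrm{tr}\,\bm{A}=a_{11}\oplus\cdots\oplus a_{nn}$; $\bm{A}^{\ast}=\bm{I}\oplus\bm{A}\oplus\cdots\oplus\bm{A}^{n-1}$. *)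

theory Defs
  imports Main
begin

class idem_semifield = comm_semiring_1 + inverse + linorder +
  assumes add_idem: "x + x = x"
    and left_inverse_nz: "x \<noteq> 0 \<Longrightarrow> inverse x * x = 1"
    and inverse_zero_sf: "inverse 0 = 0"
    and le_iff_add: "x \<le> y \<longleftrightarrow> x + y = y"
    and radicable: "0 < m \<Longrightarrow> \<exists>y. y ^ m = a"

text \<open>Rational root a^(1/m) (unique in a linearly ordered radicable semifield).\<close>
definition rt :: "nat \<Rightarrow> 'a::idem_semifield \<Rightarrow> 'a" where
  "rt m a = (THE y. y ^ m = a)"

text \<open>Vectors and n x n matrices with entries indexed by 0..n-1.\<close>
definition idm :: "nat \<Rightarrow> nat \<Rightarrow> 'a::idem_semifield" where
  "idm i j = (if i = j then 1 else 0)"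

definition mmul :: "nat \<Rightarrow> (nat \<Rightarrow> nat \<Rightarrow> 'a::idem_semifield) \<Rightarrow> (nat \<Rightarrow> nat \<Rightarrow> 'a) \<Rightarrow> nat \<Rightarrow> nat \<Rightarrow> 'a" where
  "mmul n A B i j = (\<Sum>k<n. A i k * B k j)"

primrec mpow :: "nat \<Rightarrow> (nat \<Rightarrow> nat \<Rightarrow> 'a::idem_semifield) \<Rightarrow> nat \<Rightarrow> nat \<Rightarrow> nat \<Rightarrow> 'a" where
  "mpow n A 0 = idm"
| "mpow n A (Suc k) = mmul n A (mpow n A k)"

definition mvmul :: "nat \<Rightarrow> (nat \<Rightarrow> nat \<Rightarrow> 'a::idem_semifield) \<Rightarrow> (nat \<Rightarrow> 'a) \<Rightarrow> nat \<Rightarrow> 'a" where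
  "mvmul n A x i = (\<Sum>j<n. A i j * x j)"

definition vmmul :: "nat \<Rightarrow> (nat \<Rightarrow> 'a::idem_semifield) \<Rightarrow> (nat \<Rightarrow> nat \<Rightarrow> 'a) \<Rightarrow> nat \<Rightarrow> 'a" where
  "vmmul n y A j = (\<Sum>i<n. y i * A i j)"

definition vinner :: "nat \<Rightarrow> (nat \<Rightarrow> 'a::idem_semifield) \<Rightarrow> (nat \<Rightarrow> 'a) \<Rightarrow> 'a" where
  "vinner n y x = (\<Sum>i<n. y i * x i)"

text \<open>conjugate x^- (entries x_i^{-1} if nonzero, 0 otherwise; inverse 0 = 0)\<close>
definition vconj :: "(nat \<Rightarrow> 'a::idem_semifield) \<Rightarrow> nat \<Rightarrow> 'a" where
  "vconj x i = inverse (x i)"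

definition smul :: "'a::idem_semifield \<Rightarrow> (nat \<Rightarrow> nat \<Rightarrow> 'a) \<Rightarrow> nat \<Rightarrow> nat \<Rightarrow> 'a" where
  "smul c A i j = c * A i j"

definition tr :: "nat \<Rightarrow> (nat \<Rightarrow> nat \<Rightarrow> 'a::idem_semifield) \<Rightarrow> 'a" where
  "tr n A = (\<Sum>i<n. A i i)"

definition kstar :: "nat \<Rightarrow> (nat \<Rightarrow> nat \<Rightarrow> 'a::idem_semifield) \<Rightarrow> nat \<Rightarrow> nat \<Rightarrow> 'a" where
  "kstar n A i j = (\<Sum>k<n. mpow n A k i j)"

definition regular :: "nat \<Rightarrow> (nat \<Rightarrow> 'a::idem_semifield) \<Rightarrow> bool" where
  "regular n x \<longleftrightarrow> (\<forall>i<n. x i \<noteq> 0)"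

definition vle :: "nat \<Rightarrow> (nat \<Rightarrow> 'a::idem_semifield) \<Rightarrow> (nat \<Rightarrow> 'a) \<Rightarrow> bool" where
  "vle n x y \<longleftrightarrow> (\<forall>i<n. x i \<le> y i)"

definition spec_rad :: "nat \<Rightarrow> (nat \<Rightarrow> nat \<Rightarrow> 'a::idem_semifield) \<Rightarrow> 'a" where
  "spec_rad n A = (\<Sum>k\<in>{1..n}. rt k (tr n (mpow n A k)))"

definition objf :: "nat \<Rightarrow> (nat \<Rightarrow> nat \<Rightarrow> 'a::idem_semifield) \<Rightarrow> (nat \<Rightarrow> 'a) \<Rightarrow> (nat \<Rightarrow> 'a) \<Rightarrow> 'a \<Rightarrow> (nat \<Rightarrow> 'a) \<Rightarrow> 'a" where
  "objf n A p q r x = vinner n (vconj x) (mvmul n A x) + vinner n (vconj x) p + vinner n (vconj q) x + r"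

end

theory Submission
  imports Defs
begin

lemma add_max: "(x::'a::idem_semifield) + y = max x y"
proof (cases "x \<le> y")
  case True then show ?thesis by (simp add: le_iff_add[symmetric] max_def)
next
  case False then have "y \<le> x" by simp
  then have "y + x = x" by (simp add: le_iff_add[symmetric])
  then show ?thesis using False by (simp add: add.commute max_def)
qed

lemma zero_le_sf: "0 \<le> (x::'a::idem_semifield)"
  by (simp add: le_iff_add)

lemma add_le_iff_sf: "(x::'a::idem_semifield) + y \<le> z \<longleftrightarrow> x \<le> z \<and> y \<le> z"
  by (simp add: add_max)

lemma le_add1_sf: "(x::'a::idem_semifield) \<le> x + y" by (simp add: add_max)
lemma le_add2_sf: "(y::'a::idem_semifield) \<le> x + y" by (simp add: add_max)

lemma sum_le_iff_sf: "finite S \<Longrightarrow> (sum f S \<le> (z::'a::idem_semifield)) \<longleftrightarrow> (\<forall>k\<in>S. f k \<le> z)"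
  by (induction S rule: finite_induct) (auto simp: zero_le_sf add_le_iff_sf)

lemma le_sum_sf: "finite S \<Longrightarrow> k \<in> S \<Longrightarrow> f k \<le> (sum f S::'a::idem_semifield)"
  using sum_le_iff_sf[of S f "sum f S"] by auto

lemma sum_mono_sf: "finite S \<Longrightarrow> (\<And>k. k \<in> S \<Longrightarrow> f k \<le> g k) \<Longrightarrow> sum f S \<le> (sum g S::'a::idem_semifield)"
proof -
  assume fin: "finite S" and le: "\<And>k. k \<in> S \<Longrightarrow> f k \<le> g k"
  have "\<forall>k\<in>S. f k \<le> sum g S"
  proof
    fix k assume "k \<in> S"
    then show "f k \<le> sum g S" using le[of k] le_sum_sf[OF fin, of k g] by (rule_tac order_trans) auto
  qed
  then show ?thesis using sum_le_iff_sf[OF fin] by blast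
qed

lemma sum_le_intro_sf: "(\<And>k. k < (n::nat) \<Longrightarrow> f k \<le> z) \<Longrightarrow> (\<Sum>k<n. f k) \<le> (z::'a::idem_semifield)"
  by (subst sum_le_iff_sf[OF finite_lessThan]) auto

lemma sum_attained_sf: "finite S \<Longrightarrow> S \<noteq> {} \<Longrightarrow> \<exists>k\<in>S. sum f S = (f k::'a::idem_semifield)"
proof (induction S rule: finite_induct)
  case empty then show ?case by simp
next
  case (insert a S)
  show ?case
  proof (cases "S = {}")
    case True then show ?thesis by simp
  next
    case False
    then obtain k where k: "k \<in> S" "sum f S = f k" using insert by auto
    have "sum f (insert a S) = max (f a) (f k)" using insert k by (simp add: add_max)
    then show ?thesis using k by (auto simp: max_def)
  qed
qed

lemma mult_left_mono_sf: "(a::'a::idem_semifield) \<le> b \<Longrightarrow> c * a \<le> c * b"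
proof -
  assume "a \<le> b"
  then have "a + b = b" by (simp add: le_iff_add)
  then have "c * a + c * b = c * b" by (simp add: distrib_left[symmetric])
  then show ?thesis by (simp add: le_iff_add)
qed

lemma mult_right_mono_sf: "(a::'a::idem_semifield) \<le> b \<Longrightarrow> a * c \<le> b * c"
  using mult_left_mono_sf[of a b c] by (simp add: mult.commute)

lemma mult_mono_sf: "(a::'a::idem_semifield) \<le> b \<Longrightarrow> c \<le> d \<Longrightarrow> a * c \<le> b * d"
  using mult_left_mono_sf[of c d a] mult_right_mono_sf[of a b d] by (rule order_trans)

lemma right_inverse_nz: "(x::'a::idem_semifield) \<noteq> 0 \<Longrightarrow> x * inverse x = 1"
  using left_inverse_nz[of x] by (simp add: mult.commute)

lemma inverse_nz: "(x::'a::idem_semifield) \<noteq> 0 \<Longrightarrow> inverse x \<noteq> 0"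
proof
  assume "x \<noteq> 0" "inverse x = 0"
  then have "(1::'a) = 0" using left_inverse_nz[of x] by simp
  then show False by simp
qed

lemma mult_nz: "(x::'a::idem_semifield) \<noteq> 0 \<Longrightarrow> y \<noteq> 0 \<Longrightarrow> x * y \<noteq> 0"
proof
  assume x: "x \<noteq> 0" and y: "y \<noteq> 0" and xy: "x * y = 0"
  have "y = (inverse x * x) * y" using left_inverse_nz[OF x] by simp
  also have "\<dots> = inverse x * (x * y)" by (simp add: mult.assoc)
  also have "\<dots> = 0" using xy by simp
  finally show False using y by simp
qed

lemma power_nz: "(x::'a::idem_semifield) \<noteq> 0 \<Longrightarrow> x ^ k \<noteq> 0"
  by (induction k) (auto simp: mult_nz)

lemma mult_cancel_le: "(c::'a::idem_semifield) \<noteq> 0 \<Longrightarrow> c * a \<le> c * b \<longleftrightarrow> a \<le> b"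
proof
  assume c: "c \<noteq> 0" and ca: "c * a \<le> c * b"
  from ca have "inverse c * (c * a) \<le> inverse c * (c * b)" by (rule mult_left_mono_sf)
  then show "a \<le> b" using c by (simp add: mult.assoc[symmetric] left_inverse_nz)
qed (rule mult_left_mono_sf)

lemma le_mult_iff: "(c::'a::idem_semifield) \<noteq> 0 \<Longrightarrow> a \<le> c * b \<longleftrightarrow> inverse c * a \<le> b"
proof -
  assume c: "c \<noteq> 0"
  have "a \<le> c * b \<longleftrightarrow> c * (inverse c * a) \<le> c * b"
    by (simp add: mult.assoc[symmetric] right_inverse_nz[OF c])
  also have "\<dots> \<longleftrightarrow> inverse c * a \<le> b" by (rule mult_cancel_le[OF c])
  finally show ?thesis .
qed

lemma mult_le_iff: "(c::'a::idem_semifield) \<noteq> 0 \<Longrightarrow> c * a \<le> b \<longleftrightarrow> a \<le> inverse c * b"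
proof -
  assume c: "c \<noteq> 0"
  have "c * a \<le> b \<longleftrightarrow> c * a \<le> c * (inverse c * b)"
    by (simp add: mult.assoc[symmetric] right_inverse_nz[OF c])
  also have "\<dots> \<longleftrightarrow> a \<le> inverse c * b" by (rule mult_cancel_le[OF c])
  finally show ?thesis .
qed

lemma inverse_power_sf: "(c::'a::idem_semifield) \<noteq> 0 \<Longrightarrow> inverse (c ^ k) = inverse c ^ k"
proof -
  assume c: "c \<noteq> 0"
  have ck: "c ^ k \<noteq> 0" using c by (rule power_nz)
  have eq: "inverse c ^ k * c ^ k = 1"
    by (simp add: power_mult_distrib[symmetric] left_inverse_nz[OF c])
  have "inverse (c ^ k) = inverse (c ^ k) * (inverse c ^ k * c ^ k)" using eq by simp
  also have "\<dots> = inverse c ^ k * (inverse (c ^ k) * c ^ k)" by (simp add: mult_ac)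
  also have "\<dots> = inverse c ^ k" using left_inverse_nz[OF ck] by simp
  finally show ?thesis .
qed

lemma inv_pow_le_iff: "(c::'a::idem_semifield) \<noteq> 0 \<Longrightarrow> inverse c ^ k * a \<le> b \<longleftrightarrow> a \<le> c ^ k * b"
proof -
  assume c: "c \<noteq> 0"
  have ck: "c ^ k \<noteq> 0" using c by (rule power_nz)
  show ?thesis using le_mult_iff[OF ck, of a b] by (simp add: inverse_power_sf[OF c])
qed

lemma inv_pow_le1: "(c::'a::idem_semifield) \<noteq> 0 \<Longrightarrow> inverse c ^ k * a \<le> 1 \<longleftrightarrow> a \<le> c ^ k"
  using inv_pow_le_iff[of c k a 1] by simp

lemma mult_strict_sf: "(a::'a::idem_semifield) < b \<Longrightarrow> c \<noteq> 0 \<Longrightarrow> a * c < b * c"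
proof -
  assume ab: "a < b" and c: "c \<noteq> 0"
  have "\<not> c * b \<le> c * a" using ab mult_cancel_le[OF c, of b a] by simp
  then show ?thesis by (simp add: mult.commute not_le)
qed

lemma power_strict_sf: "(a::'a::idem_semifield) < b \<Longrightarrow> 0 < m \<Longrightarrow> a ^ m < b ^ m"
proof (induction m)
  case 0 then show ?case by simp
next
  case (Suc m)
  have b: "b \<noteq> 0" using Suc.prems zero_le_sf[of a] by auto
  show ?case
  proof (cases "m = 0")
    case True then show ?thesis using Suc by simp
  next
    case False
    then have "a ^ m < b ^ m" using Suc by simp
    then have "a * a ^ m \<le> a * b ^ m" by (simp add: mult_left_mono_sf)
    also have "a * b ^ m < b * b ^ m" using Suc.prems(1) power_nz[OF b] by (rule mult_strict_sf)
    finally show ?thesis by simp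
  qed
qed

lemma power_le_iff_sf: "0 < m \<Longrightarrow> (a::'a::idem_semifield) ^ m \<le> b ^ m \<longleftrightarrow> a \<le> b"
proof
  assume m: "0 < m" and le: "a ^ m \<le> b ^ m"
  show "a \<le> b"
  proof (rule ccontr)
    assume "\<not> a \<le> b"
    then have "b < a" by simp
    then have "b ^ m < a ^ m" using m by (rule power_strict_sf)
    then show False using le by simp
  qed
next
  assume m: "0 < m" and le: "a \<le> b"
  show "a ^ m \<le> b ^ m"
  proof (cases "a = b")
    case True then show ?thesis by simp
  next
    case False
    then have "a < b" using le by simp
    then show ?thesis using power_strict_sf[of a b m] m by simp
  qed
qed

lemma power_inj_sf: "0 < m \<Longrightarrow> (a::'a::idem_semifield) ^ m = b ^ m \<Longrightarrow> a = b"
  using power_le_iff_sf[of m a b] power_le_iff_sf[of m b a] by simp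

lemma rt_power: "0 < m \<Longrightarrow> rt m (a::'a::idem_semifield) ^ m = a"
proof -
  assume m: "0 < m"
  obtain y where y: "y ^ m = a" using radicable[OF m] by blast
  have "\<exists>!y. y ^ m = a"
  proof
    show "y ^ m = a" by (rule y)
  next
    fix z assume "z ^ m = a"
    then show "z = y" using y power_inj_sf[OF m, of z y] by simp
  qed
  then show ?thesis unfolding rt_def by (rule theI')
qed

lemma rt_le_iff: "0 < m \<Longrightarrow> rt m (a::'a::idem_semifield) \<le> c \<longleftrightarrow> a \<le> c ^ m"
  using power_le_iff_sf[of m "rt m a" c] rt_power[of m a] by simp

lemma inverse_inverse_sf: "(x::'a::idem_semifield) \<noteq> 0 \<Longrightarrow> inverse (inverse x) = x"
proof -
  assume x: "x \<noteq> 0"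
  have ix: "inverse x \<noteq> 0" using x by (rule inverse_nz)
  have "inverse (inverse x) = inverse (inverse x) * (inverse x * x)" using left_inverse_nz[OF x] by simp
  also have "\<dots> = (inverse (inverse x) * inverse x) * x" by (simp add: mult.assoc)
  also have "\<dots> = x" using left_inverse_nz[OF ix] by simp
  finally show ?thesis .
qed

lemma inv_le_iff: "(x::'a::idem_semifield) \<noteq> 0 \<Longrightarrow> inverse x * a \<le> b \<longleftrightarrow> a \<le> b * x"
  using le_mult_iff[of x a b] by (simp add: mult.commute)

lemma nz_of_le: "(y::'a::idem_semifield) \<noteq> 0 \<Longrightarrow> y \<le> x \<Longrightarrow> x \<noteq> 0"
  using zero_le_sf[of y] by (auto simp: antisym)


lemma mvmul_idm: "i < n \<Longrightarrow> mvmul n idm x i = (x i::'a::idem_semifield)"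
proof -
  assume i: "i < n"
  have "mvmul n idm x i = (\<Sum>j<n. if i = j then x j else 0)"
    unfolding mvmul_def idm_def by (rule sum.cong) auto
  then show ?thesis using i by simp
qed

lemma mvmul_assoc: "mvmul n (mmul n A M) x i = mvmul n A (mvmul n M x) (i::nat)"
  for A :: "nat \<Rightarrow> nat \<Rightarrow> 'a::idem_semifield"
proof -
  have "mvmul n (mmul n A M) x i = (\<Sum>j<n. \<Sum>k<n. A i k * (M k j * x j))"
    unfolding mvmul_def mmul_def by (simp add: sum_distrib_right mult.assoc)
  also have "\<dots> = (\<Sum>k<n. \<Sum>j<n. A i k * (M k j * x j))" by (rule sum.swap)
  also have "\<dots> = mvmul n A (mvmul n M x) i"
    unfolding mvmul_def by (simp add: sum_distrib_left)
  finally show ?thesis .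
qed

lemma mvmul_mpow_Suc: "mvmul n (mpow n A (Suc k)) x i = mvmul n A (mvmul n (mpow n A k) x) i"
  for A :: "nat \<Rightarrow> nat \<Rightarrow> 'a::idem_semifield"
  by (simp add: mvmul_assoc)

lemma mvmul_mono: "(\<And>j. j < n \<Longrightarrow> x j \<le> y j) \<Longrightarrow> mvmul n M x i \<le> mvmul n M y (i::nat)"
  for M :: "nat \<Rightarrow> nat \<Rightarrow> 'a::idem_semifield"
  unfolding mvmul_def by (rule sum_mono_sf) (auto intro: mult_left_mono_sf)

lemma mvmul_mono_mat: "(\<And>j. j < n \<Longrightarrow> M i j \<le> N i j) \<Longrightarrow> mvmul n M x i \<le> mvmul n N x (i::nat)"
  for M :: "nat \<Rightarrow> nat \<Rightarrow> 'a::idem_semifield"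
  unfolding mvmul_def by (rule sum_mono_sf) (auto intro: mult_right_mono_sf)

lemma mvmul_scal: "mvmul n M (\<lambda>j. c * x j) i = c * mvmul n M x (i::nat)"
  for M :: "nat \<Rightarrow> nat \<Rightarrow> 'a::idem_semifield"
  unfolding mvmul_def by (simp add: sum_distrib_left mult.left_commute)

lemma vinner_mono: "(\<And>j. j < n \<Longrightarrow> x j \<le> y j) \<Longrightarrow> vinner n w x \<le> (vinner n w y::'a::idem_semifield)"
  unfolding vinner_def by (rule sum_mono_sf) (auto intro: mult_left_mono_sf)

lemma vinner_scal: "vinner n w (\<lambda>j. c * x j) = c * (vinner n w x::'a::idem_semifield)"
  unfolding vinner_def by (simp add: sum_distrib_left mult.left_commute)

lemma vinner_vmmul: "vinner n w (mvmul n M x) = vinner n (vmmul n w M) (x::nat\<Rightarrow>'a::idem_semifield)"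
proof -
  have "vinner n w (mvmul n M x) = (\<Sum>i<n. \<Sum>j<n. w i * M i j * x j)"
    unfolding vinner_def mvmul_def by (simp add: sum_distrib_left mult.assoc)
  also have "\<dots> = (\<Sum>j<n. \<Sum>i<n. w i * M i j * x j)" by (rule sum.swap)
  also have "\<dots> = vinner n (vmmul n w M) x"
    unfolding vinner_def vmmul_def by (simp add: sum_distrib_right)
  finally show ?thesis .
qed

lemma mpow_smul: "mpow n (smul c A) k i j = c ^ k * (mpow n A k i j::'a::idem_semifield)"
proof (induction k arbitrary: i j)
  case 0 then show ?case by simp
next
  case (Suc k)
  then show ?case
    by (simp add: mmul_def smul_def sum_distrib_left mult_ac)
qed

lemma kstar_diag: "1 \<le> n \<Longrightarrow> 1 \<le> (kstar n B i i::'a::idem_semifield)"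
  unfolding kstar_def using le_sum_sf[of "{..<n}" 0 "\<lambda>k. mpow n B k i i"]
  by (simp add: idm_def)

lemma mpow_le_kstar: "k < n \<Longrightarrow> mpow n B k i j \<le> (kstar n B i j::'a::idem_semifield)"
  unfolding kstar_def by (rule le_sum_sf) auto

lemma kstar_ge: "1 \<le> n \<Longrightarrow> i < n \<Longrightarrow> u i \<le> (mvmul n (kstar n B) u i::'a::idem_semifield)"
proof -
  assume n: "1 \<le> n" and i: "i < n"
  have "u i \<le> kstar n B i i * u i"
    using mult_right_mono_sf[OF kstar_diag[OF n, of B i], of "u i"] by simp
  also have "\<dots> \<le> mvmul n (kstar n B) u i"
    unfolding mvmul_def by (rule le_sum_sf[of _ i "\<lambda>j. kstar n B i j * u j"]) (use i in auto)
  finally show ?thesis .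
qed

lemma mmul_kstar: "mmul n B (kstar n B) i l = (\<Sum>k<n. mpow n B (Suc k) i l::'a::idem_semifield)"
proof -
  have "mmul n B (kstar n B) i l = (\<Sum>j<n. \<Sum>k<n. B i j * mpow n B k j l)"
    unfolding mmul_def kstar_def by (simp add: sum_distrib_left)
  also have "\<dots> = (\<Sum>k<n. \<Sum>j<n. B i j * mpow n B k j l)" by (rule sum.swap)
  also have "\<dots> = (\<Sum>k<n. mpow n B (Suc k) i l)" by (simp add: mmul_def)
  finally show ?thesis .
qed

lemma kstar_vec: "mvmul n (kstar n B) x i = (\<Sum>k<n. mvmul n (mpow n B k) x i::'a::idem_semifield)"
proof -
  have "mvmul n (kstar n B) x i = (\<Sum>j<n. \<Sum>k<n. mpow n B k i j * x j)"
    unfolding mvmul_def kstar_def by (simp add: sum_distrib_right)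
  also have "\<dots> = (\<Sum>k<n. \<Sum>j<n. mpow n B k i j * x j)" by (rule sum.swap)
  also have "\<dots> = (\<Sum>k<n. mvmul n (mpow n B k) x i)" by (simp add: mvmul_def)
  finally show ?thesis .
qed


definition W :: "(nat \<Rightarrow> nat \<Rightarrow> 'a::idem_semifield) \<Rightarrow> (nat \<Rightarrow> nat) \<Rightarrow> nat \<Rightarrow> 'a" where
  "W B v m = (\<Prod>t<m. B (v t) (v (Suc t)))"

lemma W_Suc: "W B v (Suc m) = B (v 0) (v (Suc 0)) * W B (\<lambda>t. v (Suc t)) m"
  unfolding W_def by (subst prod.lessThan_Suc_shift) simp

lemma path_le: "(\<And>t. t \<le> m \<Longrightarrow> v t < n) \<Longrightarrow> W B v m \<le> mpow n B m (v 0) (v m)"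
proof (induction m arbitrary: v)
  case 0 then show ?case by (simp add: W_def idm_def)
next
  case (Suc m)
  have IH: "W B (\<lambda>t. v (Suc t)) m \<le> mpow n B m (v (Suc 0)) (v (Suc m))"
    using Suc.IH[of "\<lambda>t. v (Suc t)"] Suc.prems by simp
  have "W B v (Suc m) \<le> B (v 0) (v (Suc 0)) * mpow n B m (v (Suc 0)) (v (Suc m))"
    unfolding W_Suc by (rule mult_left_mono_sf[OF IH])
  also have "\<dots> \<le> mpow n B (Suc m) (v 0) (v (Suc m))"
    using Suc.prems[of "Suc 0"] by (simp add: mmul_def le_sum_sf[of "{..<n}" "v (Suc 0)" "\<lambda>k. B (v 0) k * mpow n B m k (v (Suc m))"])
  finally show ?case .
qed

lemma mult_zero_sf: "(x::'a::idem_semifield) * y \<noteq> 0 \<Longrightarrow> x \<noteq> 0 \<and> y \<noteq> 0"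
  by auto

lemma path_ex: "i < n \<Longrightarrow> j < n \<Longrightarrow> mpow n B m i j \<noteq> 0 \<Longrightarrow>
  \<exists>v. v 0 = i \<and> v m = j \<and> (\<forall>t\<le>m. v t < n) \<and> mpow n B m i j = W B v m"
proof (induction m arbitrary: i)
  case 0
  then have "i = j" by (auto simp: idm_def split: if_splits)
  then show ?case using 0 by (rule_tac x="\<lambda>_. i" in exI) (simp add: W_def idm_def)
next
  case (Suc m)
  obtain k where k: "k < n" "mpow n B (Suc m) i j = B i k * mpow n B m k j"
    using sum_attained_sf[of "{..<n}" "\<lambda>k. B i k * mpow n B m k j"] Suc.prems
    by (auto simp: mmul_def)
  then have "mpow n B m k j \<noteq> 0" using Suc.prems by auto
  then obtain v where v: "v 0 = k" "v m = j" "\<forall>t\<le>m. v t < n" "mpow n B m k j = W B v m"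
    using Suc.IH[OF k(1) Suc.prems(2)] by blast
  define v' where "v' = (\<lambda>t. if t = 0 then i else v (t - 1))"
  have sh: "(\<lambda>t. v' (Suc t)) = v" unfolding v'_def by auto
  have "W B v' (Suc m) = B i k * W B v m"
    unfolding W_Suc sh using v(1) by (simp add: v'_def)
  moreover have "\<forall>t\<le>Suc m. v' t < n"
    using v(3) Suc.prems(1) unfolding v'_def by auto
  ultimately show ?case using k v
    by (rule_tac x=v' in exI) (simp add: v'_def)
qed

lemma tr_ge: "i < n \<Longrightarrow> M i i \<le> (tr n M::'a::idem_semifield)"
  unfolding tr_def by (rule le_sum_sf) auto

lemma cycle:
  fixes B :: "nat \<Rightarrow> nat \<Rightarrow> 'a::idem_semifield"
  assumes trB: "\<And>k. 1 \<le> k \<Longrightarrow> k \<le> n \<Longrightarrow> tr n (mpow n B k) \<le> 1"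
    and i: "i < n" and j: "j < n"
  shows "mpow n B n i j \<le> kstar n B i j"
proof (cases "mpow n B n i j = 0")
  case True then show ?thesis by (simp add: zero_le_sf)
next
  case False
  obtain v where v: "v 0 = i" "v n = j" "\<forall>t\<le>n. v t < n" "mpow n B n i j = W B v n"
    using path_ex[OF i j False] by blast
  have "\<not> inj_on v {0..n}"
  proof
    assume inj: "inj_on v {0..n}"
    have "v ` {0..n} \<subseteq> {..<n}" using v(3) by auto
    then have "card (v ` {0..n}) \<le> card {..<n}" by (rule card_mono[OF finite_lessThan])
    then have "card (v ` {0..n}) \<le> n" by simp
    moreover have "card (v ` {0..n}) = Suc n" using inj by (simp add: card_image)
    ultimately show False by simp
  qed
  then obtain a0 c0 where a0: "a0 \<in> {0..n}" "c0 \<in> {0..n}" "a0 \<noteq> c0" "v a0 = v c0"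
    unfolding inj_on_def by blast
  define a where "a = min a0 c0"
  define c where "c = max a0 c0"
  have ac: "a < c" "c \<le> n" "v a = v c" using a0 by (auto simp: a_def c_def min_def max_def)
  define s where "s = c - a"
  define L where "L = n - s"
  have s: "1 \<le> s" "s \<le> n" "c = a + s" using ac by (auto simp: s_def)
  have L: "a \<le> L" "L < n" "L + s = n" using ac s by (auto simp: L_def)
  define f where "f = (\<lambda>t. B (v t) (v (Suc t)))"
  have Wv: "W B v n = prod f {0..<a} * prod f {a..<c} * prod f {c..<n}"
    unfolding W_def f_def lessThan_atLeast0
    using ac by (simp add: prod.atLeastLessThan_concat)
  have "prod f {a..<c} = W B (\<lambda>t. v (t + a)) s"
    unfolding W_def f_def lessThan_atLeast0 s(3)
    using prod.shift_bounds_nat_ivl[of "\<lambda>t. B (v t) (v (Suc t))" 0 a s]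
    by (simp add: add.commute)
  also have "\<dots> \<le> mpow n B s (v a) (v c)"
    using path_le[of s "\<lambda>t. v (t + a)" n B] v(3) s(3) ac(2)
    by (simp add: add.commute)
  also have "\<dots> \<le> tr n (mpow n B s)"
    using ac(3) tr_ge[of "v a" n "mpow n B s"] v(3) ac(2) by auto
  also have "\<dots> \<le> 1" using trB s by auto
  finally have mid: "prod f {a..<c} \<le> 1" .
  define v' where "v' = (\<lambda>t. if t < a then v t else v (t + s))"
  define g where "g = (\<lambda>t. B (v' t) (v' (Suc t)))"
  have g1: "prod g {0..<a} = prod f {0..<a}"
  proof (rule prod.cong)
    fix t assume "t \<in> {0..<a}"
    then have t: "t < a" by simp
    have "v' (Suc t) = v (Suc t)"
    proof (cases "Suc t < a")
      case True then show ?thesis by (simp add: v'_def)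
    next
      case False
      then have "Suc t = a" using t by simp
      then show ?thesis using ac(3) s(3) by (simp add: v'_def add.commute)
    qed
    then show "g t = f t" unfolding g_def f_def using t by (simp add: v'_def)
  qed simp
  have g2: "prod g {a..<L} = prod f {c..<n}"
  proof -
    have "prod f {c..<n} = prod f {a + s..<L + s}" using L s by simp
    also have "\<dots> = prod (\<lambda>t. f (t + s)) {a..<L}" by (rule prod.shift_bounds_nat_ivl)
    also have "\<dots> = prod g {a..<L}"
      by (rule prod.cong) (auto simp: f_def g_def v'_def)
    finally show ?thesis by simp
  qed
  have Wv': "W B v' L = prod f {0..<a} * prod f {c..<n}"
    unfolding W_def lessThan_atLeast0 using L(1)
    by (simp add: prod.atLeastLessThan_concat[symmetric, of 0 a L] g1[unfolded g_def] g2[unfolded g_def])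
  have v'0: "v' 0 = i" using v(1) ac(3) s(3) by (auto simp: v'_def)
  have v'L: "v' L = j" using L v(2) by (auto simp: v'_def)
  have v'ok: "\<And>t. t \<le> L \<Longrightarrow> v' t < n" using v(3) L by (auto simp: v'_def)
  have "mpow n B n i j = prod f {0..<a} * prod f {a..<c} * prod f {c..<n}" using v(4) Wv by simp
  also have "\<dots> \<le> prod f {0..<a} * 1 * prod f {c..<n}"
    by (intro mult_mono_sf mid order_refl)
  also have "\<dots> = W B v' L" using Wv' by simp
  also have "\<dots> \<le> mpow n B L i j" using path_le[of L v' n B, OF v'ok] v'0 v'L by simp
  also have "\<dots> \<le> kstar n B i j" using L(2) by (rule mpow_le_kstar)
  finally show ?thesis .
qed


lemma vinner_le_iff: "vinner n w y \<le> (c::'a::idem_semifield) \<longleftrightarrow> (\<forall>i<n. w i * y i \<le> c)"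
  unfolding vinner_def by (auto simp: sum_le_iff_sf)

lemma obj_facts:
  fixes A :: "nat \<Rightarrow> nat \<Rightarrow> 'a::idem_semifield"
  assumes x: "regular n x" and le: "objf n A p q r x \<le> \<mu>"
  shows "(\<forall>i<n. mvmul n A x i \<le> \<mu> * x i) \<and> (\<forall>i<n. p i \<le> \<mu> * x i)
     \<and> vinner n (vconj q) x \<le> \<mu> \<and> r \<le> \<mu>"
proof -
  have 1: "vinner n (vconj x) (mvmul n A x) \<le> \<mu>" and 2: "vinner n (vconj x) p \<le> \<mu>"
    and 3: "vinner n (vconj q) x \<le> \<mu>" and 4: "r \<le> \<mu>"
    using le unfolding objf_def by (simp_all add: add_le_iff_sf)
  have "\<forall>i<n. mvmul n A x i \<le> \<mu> * x i"
  proof (intro allI impI)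
    fix i assume i: "i < n"
    have "inverse (x i) * mvmul n A x i \<le> \<mu>" using 1 i by (simp add: vinner_le_iff vconj_def)
    then show "mvmul n A x i \<le> \<mu> * x i" using x i by (simp add: regular_def inv_le_iff)
  qed
  moreover have "\<forall>i<n. p i \<le> \<mu> * x i"
  proof (intro allI impI)
    fix i assume i: "i < n"
    have "inverse (x i) * p i \<le> \<mu>" using 2 i by (simp add: vinner_le_iff vconj_def)
    then show "p i \<le> \<mu> * x i" using x i by (simp add: regular_def inv_le_iff)
  qed
  ultimately show ?thesis using 3 4 by blast
qed

lemma obj_le:
  fixes A :: "nat \<Rightarrow> nat \<Rightarrow> 'a::idem_semifield"
  assumes x: "regular n x" and "\<forall>i<n. mvmul n A x i \<le> \<mu> * x i" "\<forall>i<n. p i \<le> \<mu> * x i"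
     "vinner n (vconj q) x \<le> \<mu>" "r \<le> \<mu>"
  shows "objf n A p q r x \<le> \<mu>"
proof -
  have 1: "vinner n (vconj x) (mvmul n A x) \<le> \<mu>"
    unfolding vinner_le_iff
  proof (intro allI impI)
    fix i assume i: "i < n"
    show "vconj x i * mvmul n A x i \<le> \<mu>" using assms i by (simp add: vconj_def regular_def inv_le_iff)
  qed
  have 2: "vinner n (vconj x) p \<le> \<mu>"
    unfolding vinner_le_iff
  proof (intro allI impI)
    fix i assume i: "i < n"
    show "vconj x i * p i \<le> \<mu>" using assms i by (simp add: vconj_def regular_def inv_le_iff)
  qed
  show ?thesis unfolding objf_def using 1 2 assms by (simp add: add_le_iff_sf)
qed

lemma pow_bound:
  fixes A :: "nat \<Rightarrow> nat \<Rightarrow> 'a::idem_semifield"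
  assumes "\<forall>i<n. mvmul n A x i \<le> \<mu> * x i"
  shows "i < n \<Longrightarrow> mvmul n (mpow n A k) x i \<le> \<mu> ^ k * x i"
proof (induction k arbitrary: i)
  case 0 then show ?case by (simp add: mvmul_idm)
next
  case (Suc k)
  have "mvmul n (mpow n A (Suc k)) x i = mvmul n A (mvmul n (mpow n A k) x) i"
    by (rule mvmul_mpow_Suc)
  also have "\<dots> \<le> mvmul n A (\<lambda>j. \<mu> ^ k * x j) i"
    by (rule mvmul_mono) (use Suc.IH in auto)
  also have "\<dots> = \<mu> ^ k * mvmul n A x i" by (rule mvmul_scal)
  also have "\<dots> \<le> \<mu> ^ k * (\<mu> * x i)" using assms Suc.prems by (auto intro: mult_left_mono_sf)
  finally show ?case by (simp add: mult_ac)
qed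

lemma vinner_bound:
  fixes A :: "nat \<Rightarrow> nat \<Rightarrow> 'a::idem_semifield"
  assumes "\<forall>i<n. mvmul n A x i \<le> \<mu> * x i" and y: "\<forall>j<n. y j \<le> c1 * x j"
    and w: "vinner n w x \<le> c2"
  shows "vinner n w (mvmul n (mpow n A k) y) \<le> \<mu> ^ k * c1 * c2"
proof -
  have "vinner n w (mvmul n (mpow n A k) y) \<le> vinner n w (\<lambda>i. (c1 * \<mu> ^ k) * x i)"
  proof (rule vinner_mono)
    fix i assume i: "i < n"
    have "mvmul n (mpow n A k) y i \<le> mvmul n (mpow n A k) (\<lambda>j. c1 * x j) i"
      by (rule mvmul_mono) (use y in auto)
    also have "\<dots> = c1 * mvmul n (mpow n A k) x i" by (rule mvmul_scal)
    also have "\<dots> \<le> c1 * (\<mu> ^ k * x i)" using pow_bound[OF assms(1) i] by (rule mult_left_mono_sf)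
    finally show "mvmul n (mpow n A k) y i \<le> (c1 * \<mu> ^ k) * x i" by (simp add: mult_ac)
  qed
  also have "\<dots> = (c1 * \<mu> ^ k) * vinner n w x" by (rule vinner_scal)
  also have "\<dots> \<le> (c1 * \<mu> ^ k) * c2" using w by (rule mult_left_mono_sf)
  finally show ?thesis by (simp add: mult_ac)
qed

lemma diag_bound:
  fixes A :: "nat \<Rightarrow> nat \<Rightarrow> 'a::idem_semifield"
  assumes "\<forall>i<n. mvmul n A x i \<le> \<mu> * x i" and x: "regular n x"
  shows "tr n (mpow n A k) \<le> \<mu> ^ k"
  unfolding tr_def
proof (rule sum_le_intro_sf)
  fix i assume i: "i < n"
  have "x i * mpow n A k i i = mpow n A k i i * x i" by (simp add: mult.commute)
  also have "\<dots> \<le> mvmul n (mpow n A k) x i"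
    unfolding mvmul_def by (rule le_sum_sf[of _ i "\<lambda>j. mpow n A k i j * x j"]) (use i in auto)
  also have "\<dots> \<le> \<mu> ^ k * x i" using pow_bound[OF assms(1) i] .
  also have "\<dots> = x i * \<mu> ^ k" by (simp add: mult.commute)
  finally show "mpow n A k i i \<le> \<mu> ^ k" using x i by (simp add: mult_cancel_le regular_def)
qed

lemma entry_le: "i < n \<Longrightarrow> j < n \<Longrightarrow> w i * M i j * y j \<le> (vinner n w (mvmul n M y)::'a::idem_semifield)"
proof -
  assume i: "i < n" and j: "j < n"
  have "M i j * y j \<le> mvmul n M y i"
    unfolding mvmul_def by (rule le_sum_sf[of _ j "\<lambda>j. M i j * y j"]) (use j in auto)
  then have "w i * (M i j * y j) \<le> w i * mvmul n M y i" by (rule mult_left_mono_sf)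
  also have "\<dots> \<le> vinner n w (mvmul n M y)"
    unfolding vinner_def by (rule le_sum_sf[of _ i "\<lambda>i. w i * mvmul n M y i"]) (use i in auto)
  finally show ?thesis by (simp add: mult.assoc)
qed

lemma mvmul_cong: "(\<And>j. j < n \<Longrightarrow> x j = y j) \<Longrightarrow> mvmul n M x i = mvmul n M y i"
  unfolding mvmul_def by (rule sum.cong) auto

lemma vinner_cong: "(\<And>j. j < n \<Longrightarrow> x j = y j) \<Longrightarrow> vinner n w x = vinner n w y"
  unfolding vinner_def by (rule sum.cong) auto

lemma mvmul_smul: "mvmul n (smul c A) x i = c * (mvmul n A x i::'a::idem_semifield)"
  unfolding mvmul_def smul_def by (simp add: sum_distrib_left mult.assoc)

lemma mvmul_mpow_smul: "mvmul n (mpow n (smul c A) k) x i = c ^ k * (mvmul n (mpow n A k) x i::'a::idem_semifield)"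
  unfolding mvmul_def by (simp add: mpow_smul sum_distrib_left mult.assoc)

lemma tr_mpow_smul: "tr n (mpow n (smul c A) k) = c ^ k * (tr n (mpow n A k)::'a::idem_semifield)"
  unfolding tr_def by (simp add: mpow_smul sum_distrib_left)

lemma mult_le_one_inv: "(c::'a::idem_semifield) * inverse c \<le> 1"
  by (cases "c = 0") (simp_all add: zero_le_sf right_inverse_nz)


theorem corollary1:
  fixes A :: "nat \<Rightarrow> nat \<Rightarrow> 'a::idem_semifield"
    and p g q h :: "nat \<Rightarrow> 'a" and r :: 'a and n :: nat
  assumes "n \<ge> 1"
    and "regular n q" and "regular n h"
    and "vinner n (vconj h) g \<le> 1"
    and "spec_rad n A + rt 2 (vinner n (vconj q) p) + r > 0"
  defines "\<theta> \<equiv> spec_rad n A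
      + (\<Sum>k\<in>{1..<n}. rt k (vinner n (vconj h) (mvmul n (mpow n A k) g)))
      + (\<Sum>k<n. rt (k + 1) (vinner n (vconj q) (mvmul n (mpow n A k) g)
                              + vinner n (vconj h) (mvmul n (mpow n A k) p)))
      + (\<Sum>k<n. rt (k + 2) (vinner n (vconj q) (mvmul n (mpow n A k) p)))
      + r"
  shows "(\<exists>x. regular n x \<and> vle n g x \<and> vle n x h \<and> objf n A p q r x = \<theta>)
    \<and> (\<forall>x. regular n x \<and> vle n g x \<and> vle n x h \<longrightarrow> \<theta> \<le> objf n A p q r x)
    \<and> (\<forall>x. regular n x \<longrightarrow>
         ((vle n g x \<and> vle n x h \<and> objf n A p q r x = \<theta>) \<longleftrightarrow>
          (\<exists>u. vle n (\<lambda>i. inverse \<theta> * p i + g i) u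
             \<and> vle n u (vconj (vmmul n (\<lambda>i. inverse \<theta> * vconj q i + vconj h i)
                                       (kstar n (smul (inverse \<theta>) A))))
             \<and> (\<forall>i<n. x i = mvmul n (kstar n (smul (inverse \<theta>) A)) u i))))"
proof -
  note n = assms(1) and qr = assms(2) and hr = assms(3) and hg = assms(4)
  let ?S = "\<lambda>k. mpow n A k"
  have theta_le: "\<theta> \<le> \<mu> \<longleftrightarrow>
      (\<forall>k. 1 \<le> k \<and> k \<le> n \<longrightarrow> tr n (?S k) \<le> \<mu> ^ k)
    \<and> (\<forall>k<n. vinner n (vconj h) (mvmul n (?S k) g) \<le> \<mu> ^ k)
    \<and> (\<forall>k<n. vinner n (vconj q) (mvmul n (?S k) g) \<le> \<mu> ^ (k + 1)
            \<and> vinner n (vconj h) (mvmul n (?S k) p) \<le> \<mu> ^ (k + 1))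
    \<and> (\<forall>k<n. vinner n (vconj q) (mvmul n (?S k) p) \<le> \<mu> ^ (k + 2))
    \<and> r \<le> \<mu>" for \<mu>
  proof -
    have h0: "vinner n (vconj h) (mvmul n (?S 0) g) = vinner n (vconj h) g"
      by (rule vinner_cong) (simp add: mvmul_idm)
    have a: "(\<forall>k<n. vinner n (vconj h) (mvmul n (?S k) g) \<le> \<mu> ^ k) \<longleftrightarrow>
        (\<forall>k\<in>{1..<n}. vinner n (vconj h) (mvmul n (?S k) g) \<le> \<mu> ^ k)"
    proof
      assume H: "\<forall>k<n. vinner n (vconj h) (mvmul n (?S k) g) \<le> \<mu> ^ k"
      show "\<forall>k\<in>{1..<n}. vinner n (vconj h) (mvmul n (?S k) g) \<le> \<mu> ^ k"
        using H by simp
    next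
      assume H: "\<forall>k\<in>{1..<n}. vinner n (vconj h) (mvmul n (?S k) g) \<le> \<mu> ^ k"
      show "\<forall>k<n. vinner n (vconj h) (mvmul n (?S k) g) \<le> \<mu> ^ k"
      proof (intro allI impI)
        fix k assume k: "k < n"
        show "vinner n (vconj h) (mvmul n (?S k) g) \<le> \<mu> ^ k"
        proof (cases "k = 0")
          case True then show ?thesis using hg h0 by simp
        next
          case False then show ?thesis using H k by simp
        qed
      qed
    qed
    show ?thesis
      unfolding \<theta>_def spec_rad_def a
      by (simp add: add_le_iff_sf sum_le_iff_sf rt_le_iff Suc_le_eq Ball_def)
  qed

  have lower: "\<theta> \<le> objf n A p q r x" if xr: "regular n x" and gx: "vle n g x" and xh: "vle n x h" for x
  proof -
    define \<mu> where "\<mu> = objf n A p q r x"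
    have F: "\<forall>i<n. mvmul n A x i \<le> \<mu> * x i" "\<forall>i<n. p i \<le> \<mu> * x i"
      "vinner n (vconj q) x \<le> \<mu>" "r \<le> \<mu>"
      using obj_facts[OF xr, of A p q r \<mu>] by (auto simp: \<mu>_def)
    have hx: "vinner n (vconj h) x \<le> 1"
      using xh hr by (auto simp: vinner_le_iff vle_def vconj_def regular_def inv_le_iff)
    have g1: "\<forall>j<n. g j \<le> 1 * x j" using gx by (simp add: vle_def)
    have "\<theta> \<le> \<mu>"
    proof (subst theta_le, intro conjI allI impI)
      fix k show "1 \<le> k \<and> k \<le> n \<Longrightarrow> tr n (?S k) \<le> \<mu> ^ k" using diag_bound[OF F(1) xr] by blast
    next
      fix k
      show "vinner n (vconj h) (mvmul n (?S k) g) \<le> \<mu> ^ k"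
        using vinner_bound[OF F(1) g1 hx, of k] by simp
      show "vinner n (vconj q) (mvmul n (?S k) g) \<le> \<mu> ^ (k + 1)"
        using vinner_bound[OF F(1) g1 F(3), of k] by (simp add: mult_ac)
      show "vinner n (vconj h) (mvmul n (?S k) p) \<le> \<mu> ^ (k + 1)"
        using vinner_bound[OF F(1) F(2) hx, of k] by (simp add: mult_ac)
      show "vinner n (vconj q) (mvmul n (?S k) p) \<le> \<mu> ^ (k + 2)"
        using vinner_bound[OF F(1) F(2) F(3), of k] by (simp add: mult_ac power2_eq_square)
    next
      show "r \<le> \<mu>" by (rule F(4))
    qed
    then show ?thesis by (simp add: \<mu>_def)
  qed
  have T: "\<theta> \<le> \<theta>" by simp
  note T = T[unfolded theta_le[of \<theta>]]
  have th0: "\<theta> \<noteq> 0"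
  proof -
    have "rt 2 (vinner n (vconj q) p) \<le> (\<Sum>k<n. rt (k + 2) (vinner n (vconj q) (mvmul n (mpow n A k) p)))"
      using le_sum_sf[of "{..<n}" 0 "\<lambda>k. rt (k + 2) (vinner n (vconj q) (mvmul n (mpow n A k) p))"] n
        vinner_cong[of n "mvmul n (mpow n A 0) p" p "vconj q"]
      by (simp add: mvmul_idm numeral_2_eq_2)
    then have "spec_rad n A + rt 2 (vinner n (vconj q) p) + r \<le> \<theta>"
      unfolding \<theta>_def by (simp add: add_le_iff_sf le_add1_sf le_add2_sf order_trans[OF _ le_add1_sf] order_trans[OF _ le_add2_sf])
    then show ?thesis using assms(5) by auto
  qed

  define B where "B = smul (inverse \<theta>) A"
  define K where "K = kstar n B"
  define d where "d = (\<lambda>i. inverse \<theta> * vconj q i + vconj h i)"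
  define b where "b = (\<lambda>i. inverse \<theta> * p i + g i)"
  have ith0: "inverse \<theta> \<noteq> 0" using th0 by (rule inverse_nz)
  have trB: "tr n (mpow n B k) \<le> 1" if "1 \<le> k" "k \<le> n" for k
    unfolding B_def tr_mpow_smul using T that by (simp add: inv_pow_le1[OF th0])
  have BK_le: "mmul n B K i j \<le> K i j" if i: "i < n" and j: "j < n" for i j
    unfolding K_def mmul_kstar
  proof (rule sum_le_intro_sf)
    fix k assume k: "k < n"
    show "mpow n B (Suc k) i j \<le> kstar n B i j"
    proof (cases "Suc k < n")
      case True then show ?thesis by (rule mpow_le_kstar)
    next
      case False
      then have "Suc k = n" using k by simp
      then show ?thesis using cycle[OF trB i j] by simp
    qed
  qed
  have dK_nz: "vmmul n d K j \<noteq> 0" if j: "j < n" for j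
  proof -
    have z: "inverse (h j) \<noteq> 0" using hr j by (simp add: regular_def inverse_nz)
    have le1: "inverse (h j) \<le> d j * K j j"
    proof -
      have "inverse (h j) * 1 \<le> d j * K j j"
        by (rule mult_mono_sf) (simp_all add: d_def vconj_def le_add2_sf K_def kstar_diag[OF n])
      then show ?thesis by simp
    qed
    have le2: "d j * K j j \<le> vmmul n d K j"
      unfolding vmmul_def by (rule le_sum_sf[of _ j "\<lambda>i. d i * K i j"]) (use j in auto)
    show ?thesis by (rule nz_of_le[OF z order_trans[OF le1 le2]])
  qed
  have Kx_le: "mvmul n K x i \<le> x i" if F: "\<forall>i<n. mvmul n A x i \<le> \<theta> * x i" and i: "i < n" for x i
    unfolding K_def kstar_vec
  proof (rule sum_le_intro_sf)
    fix k assume "k < n"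
    show "mvmul n (mpow n B k) x i \<le> x i"
      unfolding B_def mvmul_mpow_smul inv_pow_le_iff[OF th0]
      using pow_bound[OF F i, of k] by simp
  qed
  have upper: "vle n g x \<and> vle n x h \<and> objf n A p q r x \<le> \<theta>"
    if bu: "vle n b u" and ud: "vle n u (vconj (vmmul n d K))" and xr: "regular n x"
      and xu: "\<forall>i<n. x i = mvmul n K u i" for u x
  proof -
    have ux: "u i \<le> x i" if "i < n" for i
      using kstar_ge[OF n that, of u B] xu that by (simp add: K_def)
    have bx: "b i \<le> x i" if "i < n" for i
      using bu ux[OF that] that by (auto simp: vle_def intro: order_trans)
    have gx: "vle n g x" using bx by (auto simp: vle_def b_def intro: order_trans[OF le_add2_sf])
    have "vinner n d x = vinner n d (mvmul n K u)" by (rule vinner_cong) (use xu in auto)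
    also have "\<dots> = vinner n (vmmul n d K) u" by (rule vinner_vmmul)
    also have "\<dots> \<le> 1"
    proof (subst vinner_le_iff, intro allI impI)
      fix j assume "j < n"
      then have "vmmul n d K j * u j \<le> vmmul n d K j * inverse (vmmul n d K j)"
        using ud by (intro mult_left_mono_sf) (simp add: vle_def vconj_def)
      also have "\<dots> \<le> 1" by (rule mult_le_one_inv)
      finally show "vmmul n d K j * u j \<le> 1" .
    qed
    finally have dx: "vinner n d x \<le> 1" .
    have dxi: "inverse \<theta> * (vconj q i * x i) \<le> 1 \<and> vconj h i * x i \<le> 1" if "i < n" for i
      using dx that by (simp add: vinner_le_iff d_def distrib_right add_le_iff_sf mult.assoc)
    have xh: "vle n x h"
      using dxi hr by (auto simp: vle_def regular_def vconj_def inv_le_iff)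
    have qx: "vinner n (vconj q) x \<le> \<theta>"
      using dxi by (auto simp: vinner_le_iff inv_le_iff[OF th0])
    have px: "\<forall>i<n. p i \<le> \<theta> * x i"
    proof (intro allI impI)
      fix i assume i: "i < n"
      have "inverse \<theta> * p i \<le> x i" using bx[OF i] by (auto simp: b_def add_le_iff_sf)
      then show "p i \<le> \<theta> * x i" by (simp add: inv_le_iff[OF th0] mult.commute)
    qed
    have Ax: "\<forall>i<n. mvmul n A x i \<le> \<theta> * x i"
    proof (intro allI impI)
      fix i assume i: "i < n"
      have "inverse \<theta> * mvmul n A x i = mvmul n B x i" by (simp add: B_def mvmul_smul)
      also have "\<dots> = mvmul n B (mvmul n K u) i" by (rule mvmul_cong) (use xu in auto)
      also have "\<dots> = mvmul n (mmul n B K) u i" by (rule mvmul_assoc[symmetric])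
      also have "\<dots> \<le> mvmul n K u i" by (rule mvmul_mono_mat) (use BK_le i in auto)
      also have "\<dots> = x i" using xu i by simp
      finally show "mvmul n A x i \<le> \<theta> * x i" by (simp add: inv_le_iff[OF th0] mult.commute)
    qed
    have "objf n A p q r x \<le> \<theta>" by (rule obj_le[OF xr Ax px qx]) (use T in simp)
    then show ?thesis using gx xh by simp
  qed

  have dKx: "vmmul n d K j * x j \<le> 1"
    if xr: "regular n x" and xh: "vle n x h" and F: "\<forall>i<n. mvmul n A x i \<le> \<theta> * x i"
      and qx: "vinner n (vconj q) x \<le> \<theta>" and j: "j < n" for x j
  proof -
    have "vmmul n d K j * x j \<le> vinner n (vmmul n d K) x"
      unfolding vinner_def by (rule le_sum_sf[of _ j "\<lambda>j. vmmul n d K j * x j"]) (use j in auto)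
    also have "\<dots> = vinner n d (mvmul n K x)" by (rule vinner_vmmul[symmetric])
    also have "\<dots> \<le> vinner n d x" by (rule vinner_mono) (rule Kx_le[OF F])
    also have "\<dots> \<le> 1"
    proof (subst vinner_le_iff, intro allI impI)
      fix i assume i: "i < n"
      have a: "vconj q i * x i \<le> \<theta>" using qx i by (simp add: vinner_le_iff)
      have b: "vconj h i * x i \<le> 1" using xh hr i by (simp add: vle_def regular_def vconj_def inv_le_iff)
      show "d i * x i \<le> 1"
        using a b by (simp add: d_def distrib_right add_le_iff_sf mult.assoc inv_le_iff[OF th0])
    qed
    finally show ?thesis .
  qed
  have charact: "(vle n g x \<and> vle n x h \<and> objf n A p q r x = \<theta>) \<longleftrightarrow>
      (\<exists>u. vle n b u \<and> vle n u (vconj (vmmul n d K)) \<and> (\<forall>i<n. x i = mvmul n K u i))"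
    if xr: "regular n x" for x
  proof
    assume H: "vle n g x \<and> vle n x h \<and> objf n A p q r x = \<theta>"
    then have F: "\<forall>i<n. mvmul n A x i \<le> \<theta> * x i" "\<forall>i<n. p i \<le> \<theta> * x i"
      "vinner n (vconj q) x \<le> \<theta>"
      using obj_facts[OF xr, of A p q r \<theta>] by auto
    have "vle n b x"
      unfolding vle_def b_def using H F(2)
      by (auto simp: add_le_iff_sf vle_def inv_le_iff[OF th0] mult.commute)
    moreover have "vle n x (vconj (vmmul n d K))"
      unfolding vle_def vconj_def
    proof (intro allI impI)
      fix j assume j: "j < n"
      show "x j \<le> inverse (vmmul n d K j)"
        using dKx[OF xr _ F(1) F(3) j] H dK_nz[OF j] mult_le_iff[OF dK_nz[OF j], of "x j" 1] by simp
    qed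
    moreover have "\<forall>i<n. x i = mvmul n K x i"
      using Kx_le[OF F(1)] kstar_ge[OF n, of _ x B] by (auto simp: K_def intro: antisym)
    ultimately show "\<exists>u. vle n b u \<and> vle n u (vconj (vmmul n d K)) \<and> (\<forall>i<n. x i = mvmul n K u i)"
      by blast
  next
    assume "\<exists>u. vle n b u \<and> vle n u (vconj (vmmul n d K)) \<and> (\<forall>i<n. x i = mvmul n K u i)"
    then obtain u where u: "vle n b u" "vle n u (vconj (vmmul n d K))" "\<forall>i<n. x i = mvmul n K u i"
      by blast
    have "vle n g x \<and> vle n x h \<and> objf n A p q r x \<le> \<theta>" by (rule upper[OF u(1,2) xr u(3)])
    then show "vle n g x \<and> vle n x h \<and> objf n A p q r x = \<theta>"
      using lower[OF xr] by (auto intro: antisym)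
  qed
  define u0 where "u0 = vconj (vmmul n d K)"
  have bu0: "vle n b u0"
    unfolding vle_def u0_def vconj_def
  proof (intro allI impI)
    fix j assume j: "j < n"
    have "vmmul n d K j * b j \<le> 1"
    proof -
      have "vmmul n d K j * b j = (\<Sum>i<n. d i * K i j * b j)"
        unfolding vmmul_def by (simp add: sum_distrib_right)
      also have "\<dots> \<le> 1"
      proof (rule sum_le_intro_sf)
        fix i assume i: "i < n"
        have "d i * K i j * b j = (\<Sum>k<n. d i * (inverse \<theta> ^ k * mpow n A k i j) * b j)"
          unfolding K_def kstar_def B_def mpow_smul by (simp add: sum_distrib_left sum_distrib_right)
        also have "\<dots> \<le> 1"
        proof (rule sum_le_intro_sf)
          fix k assume k: "k < n"
          define X1 where "X1 = vconj q i * mpow n A k i j * p j"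
          define X2 where "X2 = vconj q i * mpow n A k i j * g j"
          define X3 where "X3 = vconj h i * mpow n A k i j * p j"
          define X4 where "X4 = vconj h i * mpow n A k i j * g j"
          have eq: "d i * (inverse \<theta> ^ k * mpow n A k i j) * b j =
             inverse \<theta> ^ (k + 2) * X1 + inverse \<theta> ^ (k + 1) * X2 + inverse \<theta> ^ (k + 1) * X3
             + inverse \<theta> ^ k * X4"
            unfolding d_def b_def X1_def X2_def X3_def X4_def
            by (simp add: distrib_left distrib_right power_add power2_eq_square mult_ac add_ac)
          have b1: "X1 \<le> \<theta> ^ (k + 2)"
            using entry_le[OF i j, of "vconj q" "mpow n A k" p] T k unfolding X1_def by (auto intro: order_trans)
          have b2: "X2 \<le> \<theta> ^ (k + 1)"
            using entry_le[OF i j, of "vconj q" "mpow n A k" g] T k unfolding X2_def by (auto intro: order_trans)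
          have b3: "X3 \<le> \<theta> ^ (k + 1)"
            using entry_le[OF i j, of "vconj h" "mpow n A k" p] T k unfolding X3_def by (auto intro: order_trans)
          have b4: "X4 \<le> \<theta> ^ k"
            using entry_le[OF i j, of "vconj h" "mpow n A k" g] T k unfolding X4_def by (auto intro: order_trans)
          show "d i * (inverse \<theta> ^ k * mpow n A k i j) * b j \<le> 1"
          proof -
            have c1: "inverse \<theta> ^ (k + 2) * X1 \<le> 1" by (subst inv_pow_le1[OF th0]) (rule b1)
            have c2: "inverse \<theta> ^ (k + 1) * X2 \<le> 1" by (subst inv_pow_le1[OF th0]) (rule b2)
            have c3: "inverse \<theta> ^ (k + 1) * X3 \<le> 1" by (subst inv_pow_le1[OF th0]) (rule b3)
            have c4: "inverse \<theta> ^ k * X4 \<le> 1" by (subst inv_pow_le1[OF th0]) (rule b4)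
            show ?thesis unfolding eq add_le_iff_sf using c1 c2 c3 c4 by blast
          qed
        qed
        finally show "d i * K i j * b j \<le> 1" .
      qed
      finally show ?thesis .
    qed
    then show "b j \<le> inverse (vmmul n d K j)"
      using mult_le_iff[OF dK_nz[OF j], of "b j" 1] by simp
  qed
  define x0 where "x0 = (\<lambda>i. mvmul n K u0 i)"
  have x0r: "regular n x0"
    unfolding regular_def
  proof (intro allI impI)
    fix i assume i: "i < n"
    have "u0 i \<noteq> 0" using dK_nz[OF i] by (simp add: u0_def vconj_def inverse_nz)
    moreover have "u0 i \<le> x0 i" using kstar_ge[OF n i, of u0 B] by (simp add: x0_def K_def)
    ultimately show "x0 i \<noteq> 0" by (rule nz_of_le)
  qed
  have ex: "vle n g x0 \<and> vle n x0 h \<and> objf n A p q r x0 = \<theta>"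
  proof -
    have "\<exists>u. vle n b u \<and> vle n u (vconj (vmmul n d K)) \<and> (\<forall>i<n. x0 i = mvmul n K u i)"
      using bu0 by (rule_tac x=u0 in exI) (simp add: u0_def x0_def vle_def)
    then show ?thesis using charact[OF x0r] by blast
  qed
  show ?thesis
    using ex x0r lower charact unfolding b_def d_def K_def B_def by blast
qed

end
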